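(* Let $K=\{K_X\}_{X\subset\Lambda_L}$ be an even interaction on $\Lambda_L$ and $K_{\Lambda_L}=\sum_{X\subset\Lambda_L}K_X$. Then, for every $\kappa\ge0$, \[ \bigl\|[K_{\Lambda_L},\bar q_{\Lambda_L}]\bigr\|\le2\|K\|_0\le2\|K\|_\kappa . \]
   Context: $\Lambda_L=(\mathbb Z/L\mathbb Z)^d$, $L\in2\mathbb N$; fermionic Fock space over $\ell^2(\Lambda_L)\otimes\mathbb C^2$ with CAR operators $c_{x\sigma}$, $n_{x\sigma}=c^*_{x\sigma}c_{x\sigma}$, $n_x=n_{x\uparrow}+n_{x\downarrow}$, $q_x=(n_x-1)^2$, $\bar q_{\Lambda_L}=|\Lambda_L|^{-1}\sum_{x\in\Lambda_L}q_x$. An even interaction is $K=\{K_X\}$ with $K_X$ a parity-even (invariant under $c_{x\sigma}\mapsto-c_{x\sigma}$) element of the CAR algebra generated by $c_{x\sigma},c^*_{x\sigma}$, $x\in X$. $\|K\|_\kappa=\sup_x\sum_{X\ni x}e^{\kappa|X|}\|K_X\|$ (operator norm), $\|K\|_0$ the case $\kappa=0$. *)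

theory Defs
  imports Complex_Main "HOL-Library.List_Lexorder" "HOL-Library.Product_Lexorder"
begin

text \<open>Sites of the torus (Z/LZ)^d are encoded as lists of length d with entries < L.
  A mode is a pair (site, spin), spin True = up, False = down.
  The fermionic Fock space over l2(Lambda) x C^2 is realised in the occupation-number basis:
  basis vectors are indexed by subsets S of the set of modes (occupied modes).
  Operators are matrices indexed by pairs of such subsets, vanishing outside the basis B.\<close>

type_synonym site = "nat list"
type_synonym mode = "site \<times> bool"
type_synonym op = "mode set \<Rightarrow> mode set \<Rightarrow> complex"

definition Lam :: "nat \<Rightarrow> nat \<Rightarrow> site set" where
  "Lam d L = {x. length x = d \<and> set x \<subseteq> {..<L}}"

definition modes :: "site set \<Rightarrow> mode set" where
  "modes X = X \<times> (UNIV :: bool set)"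

definition fock_basis :: "site set \<Rightarrow> mode set set" where
  "fock_basis \<Lambda> = Pow (modes \<Lambda>)"

definition idop :: "mode set set \<Rightarrow> op" where
  "idop B = (\<lambda>S T. if S \<in> B \<and> T \<in> B \<and> S = T then 1 else 0)"

definition opmul :: "mode set set \<Rightarrow> op \<Rightarrow> op \<Rightarrow> op" where
  "opmul B A C = (\<lambda>S T. \<Sum>U\<in>B. A S U * C U T)"

definition opadj :: "op \<Rightarrow> op" where
  "opadj A = (\<lambda>S T. cnj (A T S))"

definition opadd :: "op \<Rightarrow> op \<Rightarrow> op" where
  "opadd A C = (\<lambda>S T. A S T + C S T)"

definition opsub :: "op \<Rightarrow> op \<Rightarrow> op" where
  "opsub A C = (\<lambda>S T. A S T - C S T)"

definition opscale :: "complex \<Rightarrow> op \<Rightarrow> op" where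
  "opscale a A = (\<lambda>S T. a * A S T)"

text \<open>Annihilation operator (Jordan--Wigner with respect to the linear order on modes).\<close>
definition annih :: "mode set set \<Rightarrow> mode \<Rightarrow> op" where
  "annih B m = (\<lambda>S T. if S \<in> B \<and> T \<in> B \<and> m \<in> T \<and> S = T - {m}
                       then (-1) ^ card {k\<in>T. k < m} else 0)"

definition creat :: "mode set set \<Rightarrow> mode \<Rightarrow> op" where
  "creat B m = opadj (annih B m)"

text \<open>Parity operator (-1)^N; conjugation by it implements c \<mapsto> -c.\<close>
definition parity :: "mode set set \<Rightarrow> op" where
  "parity B = (\<lambda>S T. if S \<in> B \<and> T \<in> B \<and> S = T then (-1) ^ card S else 0)"

inductive_set car_alg :: "mode set set \<Rightarrow> mode set \<Rightarrow> op set" for B M where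
  car_id: "idop B \<in> car_alg B M"
| car_annih: "m \<in> M \<Longrightarrow> annih B m \<in> car_alg B M"
| car_creat: "m \<in> M \<Longrightarrow> creat B m \<in> car_alg B M"
| car_add: "A \<in> car_alg B M \<Longrightarrow> C \<in> car_alg B M \<Longrightarrow> opadd A C \<in> car_alg B M"
| car_scale: "A \<in> car_alg B M \<Longrightarrow> opscale a A \<in> car_alg B M"
| car_mul: "A \<in> car_alg B M \<Longrightarrow> C \<in> car_alg B M \<Longrightarrow> opmul B A C \<in> car_alg B M"

definition even_op :: "mode set set \<Rightarrow> op \<Rightarrow> bool" where
  "even_op B A \<longleftrightarrow> opmul B (opmul B (parity B) A) (parity B) = A"

definition even_interaction :: "site set \<Rightarrow> (site set \<Rightarrow> op) \<Rightarrow> bool" where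
  "even_interaction \<Lambda> K \<longleftrightarrow>
     (\<forall>X. X \<subseteq> \<Lambda> \<longrightarrow> K X \<in> car_alg (fock_basis \<Lambda>) (modes X) \<and> even_op (fock_basis \<Lambda>) (K X))"

definition vnorm :: "mode set set \<Rightarrow> (mode set \<Rightarrow> complex) \<Rightarrow> real" where
  "vnorm B v = sqrt (\<Sum>S\<in>B. (cmod (v S))\<^sup>2)"

definition opapp :: "mode set set \<Rightarrow> op \<Rightarrow> (mode set \<Rightarrow> complex) \<Rightarrow> (mode set \<Rightarrow> complex)" where
  "opapp B A v = (\<lambda>S. \<Sum>T\<in>B. A S T * v T)"

definition opnorm :: "mode set set \<Rightarrow> op \<Rightarrow> real" where
  "opnorm B A = Sup ((\<lambda>v. vnorm B (opapp B A v)) ` {v. vnorm B v \<le> 1})"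

definition commutator :: "mode set set \<Rightarrow> op \<Rightarrow> op \<Rightarrow> op" where
  "commutator B A C = opsub (opmul B A C) (opmul B C A)"

definition numop :: "mode set set \<Rightarrow> mode \<Rightarrow> op" where
  "numop B m = opmul B (creat B m) (annih B m)"

definition n_site :: "mode set set \<Rightarrow> site \<Rightarrow> op" where
  "n_site B x = opadd (numop B (x, True)) (numop B (x, False))"

definition q_site :: "mode set set \<Rightarrow> site \<Rightarrow> op" where
  "q_site B x = opmul B (opsub (n_site B x) (idop B)) (opsub (n_site B x) (idop B))"

definition qbar :: "site set \<Rightarrow> op" where
  "qbar \<Lambda> = opscale (1 / of_nat (card \<Lambda>)) (\<lambda>S T. \<Sum>x\<in>\<Lambda>. q_site (fock_basis \<Lambda>) x S T)"

definition K_total :: "site set \<Rightarrow> (site set \<Rightarrow> op) \<Rightarrow> op" where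
  "K_total \<Lambda> K = (\<lambda>S T. \<Sum>X\<in>Pow \<Lambda>. K X S T)"

definition int_norm :: "site set \<Rightarrow> (site set \<Rightarrow> op) \<Rightarrow> real \<Rightarrow> real" where
  "int_norm \<Lambda> K \<kappa> = Sup ((\<lambda>x. \<Sum>X\<in>{X. X \<subseteq> \<Lambda> \<and> x \<in> X}.
        exp (\<kappa> * real (card X)) * opnorm (fock_basis \<Lambda>) (K X)) ` \<Lambda>)"

end

theory Submission imports Defs "HOL-Analysis.L2_Norm" begin

lemma vnorm_L2: "vnorm B v = L2_set (\<lambda>S. cmod (v S)) B"
  unfolding vnorm_def L2_set_def by simp

lemma vnorm_nonneg: "0 \<le> vnorm B v"
  by (simp add: vnorm_L2)

lemma vnorm_cong: "(\<And>S. S \<in> B \<Longrightarrow> u S = w S) \<Longrightarrow> vnorm B u = vnorm B w"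
  unfolding vnorm_def by (metis (no_types, lifting) sum.cong)

lemma vnorm_mono: "(\<And>S. S \<in> B \<Longrightarrow> cmod (u S) \<le> cmod (w S)) \<Longrightarrow> vnorm B u \<le> vnorm B w"
  unfolding vnorm_L2 by (rule L2_set_mono) auto

lemma vnorm_add: "vnorm B (\<lambda>S. u S + w S) \<le> vnorm B u + vnorm B w"
proof -
  have "vnorm B (\<lambda>S. u S + w S) \<le> L2_set (\<lambda>S. cmod (u S) + cmod (w S)) B"
    unfolding vnorm_L2 by (rule L2_set_mono) (auto intro: norm_triangle_ineq)
  also have "\<dots> \<le> vnorm B u + vnorm B w"
    unfolding vnorm_L2 by (rule L2_set_triangle_ineq)
  finally show ?thesis .
qed

lemma vnorm_diff: "vnorm B (\<lambda>S. u S - w S) \<le> vnorm B u + vnorm B w"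
proof -
  have "vnorm B (\<lambda>S. u S - w S) \<le> L2_set (\<lambda>S. cmod (u S) + cmod (w S)) B"
    unfolding vnorm_L2 by (rule L2_set_mono) (auto intro: norm_triangle_ineq4)
  also have "\<dots> \<le> vnorm B u + vnorm B w"
    unfolding vnorm_L2 by (rule L2_set_triangle_ineq)
  finally show ?thesis .
qed

lemma vnorm_scale: "vnorm B (\<lambda>S. c * u S) = cmod c * vnorm B u"
  unfolding vnorm_L2 by (simp add: L2_set_right_distrib norm_mult)

lemma vnorm_sum:
  assumes "finite I"
  shows "vnorm B (\<lambda>S. \<Sum>i\<in>I. f i S) \<le> (\<Sum>i\<in>I. vnorm B (f i))"
  using assms
proof (induction I rule: finite_induct)
  case empty
  then show ?case by (simp add: vnorm_def)
next
  case (insert x F)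
  have "vnorm B (\<lambda>S. \<Sum>i\<in>insert x F. f i S) = vnorm B (\<lambda>S. f x S + (\<Sum>i\<in>F. f i S))"
    using insert by simp
  also have "\<dots> \<le> vnorm B (f x) + vnorm B (\<lambda>S. \<Sum>i\<in>F. f i S)"
    by (rule vnorm_add)
  also have "\<dots> \<le> vnorm B (f x) + (\<Sum>i\<in>F. vnorm B (f i))"
    using insert by simp
  finally show ?case using insert by simp
qed

lemma comp_le_vnorm: "finite B \<Longrightarrow> S \<in> B \<Longrightarrow> cmod (v S) \<le> vnorm B v"
  unfolding vnorm_L2 by (rule member_le_L2_set)

lemma opapp_crude:
  assumes "finite B"
  shows "vnorm B (opapp B A v) \<le> (\<Sum>S\<in>B. \<Sum>T\<in>B. cmod (A S T)) * vnorm B v"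
proof -
  have pt: "cmod (opapp B A v S) \<le> (\<Sum>T\<in>B. cmod (A S T)) * vnorm B v" for S
  proof -
    have "cmod (opapp B A v S) \<le> (\<Sum>T\<in>B. cmod (A S T * v T))"
      unfolding opapp_def by (rule norm_sum)
    also have "\<dots> \<le> (\<Sum>T\<in>B. cmod (A S T) * vnorm B v)"
      by (rule sum_mono) (simp add: norm_mult assms comp_le_vnorm mult_left_mono)
    finally show ?thesis by (simp add: sum_distrib_right)
  qed
  have "vnorm B (opapp B A v) \<le> (\<Sum>S\<in>B. cmod (opapp B A v S))"
    unfolding vnorm_L2 by (rule L2_set_le_sum) simp
  also have "\<dots> \<le> (\<Sum>S\<in>B. (\<Sum>T\<in>B. cmod (A S T)) * vnorm B v)"
    by (rule sum_mono) (rule pt)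
  finally show ?thesis by (simp add: sum_distrib_right)
qed

lemma opnorm_bdd:
  assumes "finite B"
  shows "bdd_above ((\<lambda>v. vnorm B (opapp B A v)) ` {v. vnorm B v \<le> 1})"
proof (rule bdd_aboveI2)
  fix v assume "v \<in> {v. vnorm B v \<le> 1}"
  then have "vnorm B v \<le> 1" by simp
  have "vnorm B (opapp B A v) \<le> (\<Sum>S\<in>B. \<Sum>T\<in>B. cmod (A S T)) * vnorm B v"
    by (rule opapp_crude[OF assms])
  also have "\<dots> \<le> (\<Sum>S\<in>B. \<Sum>T\<in>B. cmod (A S T))"
    using \<open>vnorm B v \<le> 1\<close> vnorm_nonneg
    by (simp add: mult_left_le sum_nonneg)
  finally show "vnorm B (opapp B A v) \<le> (\<Sum>S\<in>B. \<Sum>T\<in>B. cmod (A S T))" .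
qed

lemma vnorm_zero: "vnorm B (\<lambda>_. 0) = 0"
  by (simp add: vnorm_def)

lemma opapp_zero: "opapp B A (\<lambda>_. 0) = (\<lambda>_. 0)"
  by (simp add: opapp_def)

lemma opnorm_upper:
  assumes "finite B" "vnorm B v \<le> 1"
  shows "vnorm B (opapp B A v) \<le> opnorm B A"
  unfolding opnorm_def
  by (rule cSup_upper) (use assms opnorm_bdd[OF assms(1)] in auto)

lemma opnorm_nonneg:
  assumes "finite B"
  shows "0 \<le> opnorm B A"
  using opnorm_upper[OF assms, of "\<lambda>_. 0" A] by (simp add: vnorm_zero opapp_zero)

lemma opnorm_le:
  assumes "\<And>v. vnorm B v \<le> 1 \<Longrightarrow> vnorm B (opapp B A v) \<le> c"
  shows "opnorm B A \<le> c"
  unfolding opnorm_def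
proof (rule cSup_least)
  show "(\<lambda>v. vnorm B (opapp B A v)) ` {v. vnorm B v \<le> 1} \<noteq> {}"
  proof -
    have "(\<lambda>_. 0) \<in> {v. vnorm B v \<le> 1}" using vnorm_zero[of B] by simp
    then show ?thesis by blast
  qed
qed (use assms in auto)

lemma opapp_scale: "opapp B A (\<lambda>T. c * v T) = (\<lambda>S. c * opapp B A v S)"
  unfolding opapp_def by (auto simp: sum_distrib_left ac_simps)

lemma opapp_le_opnorm:
  assumes "finite B"
  shows "vnorm B (opapp B A v) \<le> opnorm B A * vnorm B v"
proof (cases "vnorm B v = 0")
  case True
  then have "\<forall>S\<in>B. v S = 0"
    using assms unfolding vnorm_L2 by (simp add: L2_set_eq_0_iff)
  then have "vnorm B (opapp B A v) = 0"
    unfolding opapp_def vnorm_def by simp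
  then show ?thesis using True by simp
next
  case False
  then have pos: "vnorm B v > 0" using vnorm_nonneg[of B v] by simp
  define w where "w = (\<lambda>T. complex_of_real (1 / vnorm B v) * v T)"
  have "vnorm B w = 1" unfolding w_def vnorm_scale using pos
    by (simp add: norm_divide)
  then have "vnorm B (opapp B A w) \<le> opnorm B A" using opnorm_upper[OF assms] by simp
  moreover have "vnorm B (opapp B A w) = vnorm B (opapp B A v) / vnorm B v"
    unfolding w_def opapp_scale vnorm_scale using pos by (simp add: norm_divide)
  ultimately show ?thesis using pos by (simp add: divide_le_eq mult.commute)
qed


definition diag :: "mode set set \<Rightarrow> op \<Rightarrow> (mode set \<Rightarrow> complex) \<Rightarrow> bool" where
  "diag B D f \<longleftrightarrow> (\<forall>S T. D S T = (if S \<in> B \<and> T \<in> B \<and> S = T then f S else 0))"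

lemma diag_idop: "diag B (idop B) (\<lambda>_. 1)"
  unfolding diag_def idop_def by simp

lemma diag_add: "diag B D f \<Longrightarrow> diag B E g \<Longrightarrow> diag B (opadd D E) (\<lambda>S. f S + g S)"
  unfolding diag_def opadd_def by simp

lemma diag_sub: "diag B D f \<Longrightarrow> diag B E g \<Longrightarrow> diag B (opsub D E) (\<lambda>S. f S - g S)"
  unfolding diag_def opsub_def by simp

lemma diag_scale: "diag B D f \<Longrightarrow> diag B (opscale c D) (\<lambda>S. c * f S)"
  unfolding diag_def opscale_def by simp

lemma diag_mul:
  assumes "finite B" "diag B D f" "diag B E g"
  shows "diag B (opmul B D E) (\<lambda>S. f S * g S)"
  unfolding diag_def
proof (intro allI)
  fix S T
  have "opmul B D E S T = (\<Sum>U\<in>B. if U = S then (if S \<in> B \<and> T \<in> B \<and> S = T then f S * g S else 0) else 0)"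
    unfolding opmul_def using assms(2,3) unfolding diag_def by (intro sum.cong) auto
  also have "\<dots> = (if S \<in> B \<and> T \<in> B \<and> S = T then f S * g S else 0)"
    using assms(1) by (simp add: sum.delta)
  finally show "opmul B D E S T = (if S \<in> B \<and> T \<in> B \<and> S = T then f S * g S else 0)" .
qed

lemma diag_sum:
  assumes "\<And>x. x \<in> I \<Longrightarrow> diag B (D x) (f x)"
  shows "diag B (\<lambda>S T. \<Sum>x\<in>I. D x S T) (\<lambda>S. \<Sum>x\<in>I. f x S)"
  using assms unfolding diag_def by (auto intro: sum.neutral)

lemma diag_numop:
  assumes "finite B" and down: "\<And>S. S \<in> B \<Longrightarrow> S - {m} \<in> B"
  shows "diag B (numop B m) (\<lambda>S. if m \<in> S then 1 else 0)"
  unfolding diag_def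
proof (intro allI)
  fix S T
  show "numop B m S T = (if S \<in> B \<and> T \<in> B \<and> S = T then (if m \<in> S then 1 else 0) else 0)"
  proof (cases "S \<in> B \<and> T \<in> B \<and> S = T \<and> m \<in> S")
    case True
    have "numop B m S T = (\<Sum>U\<in>B. if U = S - {m} then 1 else 0)"
      unfolding numop_def opmul_def creat_def opadj_def annih_def
      using True by (intro sum.cong) (auto simp: power_mult_distrib[symmetric])
    also have "\<dots> = 1" using True down assms(1) by (simp add: sum.delta)
    finally have "numop B m S T = 1" .
    then show ?thesis using True by auto
  next
    case False
    have "numop B m S T = (\<Sum>U\<in>B. 0)"
      unfolding numop_def opmul_def creat_def opadj_def annih_def
      using False by (intro sum.cong) auto
    then show ?thesis using False by auto
  qed
qed

definition qf :: "site \<Rightarrow> mode set \<Rightarrow> complex" where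
  "qf x S = ((if (x, True) \<in> S then 1 else 0) + (if (x, False) \<in> S then 1 else 0) - 1)\<^sup>2"

lemma qf_bound: "cmod (qf x S) \<le> 1"
  unfolding qf_def by auto

lemma diag_q_site:
  assumes "finite B" and down: "\<And>S m. S \<in> B \<Longrightarrow> S - {m} \<in> B"
  shows "diag B (q_site B x) (qf x)"
proof -
  have n: "diag B (n_site B x) (\<lambda>S. (if (x, True) \<in> S then 1 else 0) + (if (x, False) \<in> S then 1 else 0))"
    unfolding n_site_def by (intro diag_add diag_numop assms)
  have "diag B (opsub (n_site B x) (idop B)) (\<lambda>S. (if (x, True) \<in> S then 1 else 0) + (if (x, False) \<in> S then 1 else 0) - 1)"
    by (rule diag_sub[OF n diag_idop])
  from diag_mul[OF assms(1) this this] show ?thesis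
    unfolding q_site_def qf_def by (simp add: power2_eq_square)
qed

lemma car_alg_support:
  assumes "A \<in> car_alg B M"
  shows "A S T \<noteq> 0 \<Longrightarrow> S - M = T - M"
  using assms
proof (induction arbitrary: S T rule: car_alg.induct)
  case car_id
  then show ?case by (auto simp: idop_def split: if_splits)
next
  case (car_annih m)
  then show ?case by (auto simp: annih_def split: if_splits)
next
  case (car_creat m)
  then show ?case by (auto simp: creat_def opadj_def annih_def split: if_splits)
next
  case (car_add A C)
  then have "A S T \<noteq> 0 \<or> C S T \<noteq> 0" by (auto simp: opadd_def)
  then show ?case using car_add.IH by blast
next
  case (car_scale A a)
  then show ?case by (auto simp: opscale_def)
next
  case (car_mul A C)
  then obtain U where "A S U * C U T \<noteq> 0" unfolding opmul_def
    by (meson sum.neutral)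
  then show ?case using car_mul.IH by fastforce
qed

lemma comm_diag:
  assumes "finite B" "diag B D g" "S \<in> B" "T \<in> B"
  shows "commutator B A D S T = A S T * (g T - g S)"
proof -
  have 1: "opmul B A D S T = A S T * g T"
  proof -
    have "opmul B A D S T = (\<Sum>U\<in>B. if U = T then A S T * g T else 0)"
      unfolding opmul_def using assms(2,4) unfolding diag_def by (intro sum.cong) auto
    then show ?thesis using assms by (simp add: sum.delta)
  qed
  have 2: "opmul B D A S T = g S * A S T"
  proof -
    have "opmul B D A S T = (\<Sum>U\<in>B. if U = S then g S * A S T else 0)"
      unfolding opmul_def using assms(2,3) unfolding diag_def by (intro sum.cong) auto
    then show ?thesis using assms by (simp add: sum.delta)
  qed
  show ?thesis unfolding commutator_def opsub_def 1 2 by (simp add: algebra_simps)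
qed


lemma Lam_finite: "finite (Lam d L)"
proof -
  have "Lam d L = {xs. set xs \<subseteq> {..<L} \<and> length xs = d}" unfolding Lam_def by auto
  then show ?thesis using finite_lists_length_eq[of "{..<L}" d] by simp
qed

lemma Lam_ne: "L > 0 \<Longrightarrow> Lam d L \<noteq> {}"
  unfolding Lam_def by (rule ccontr) (auto dest: spec[of _ "replicate d 0"])

lemma fb_finite: "finite \<Lambda> \<Longrightarrow> finite (fock_basis \<Lambda>)"
  unfolding fock_basis_def modes_def by simp

lemma fb_down: "S \<in> fock_basis \<Lambda> \<Longrightarrow> S - {m} \<in> fock_basis \<Lambda>"
  unfolding fock_basis_def by auto

lemma qbar_diag:
  assumes "finite \<Lambda>"
  shows "diag (fock_basis \<Lambda>) (qbar \<Lambda>) (\<lambda>S. (1 / of_nat (card \<Lambda>)) * (\<Sum>x\<in>\<Lambda>. qf x S))"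
  unfolding qbar_def
  by (intro diag_scale diag_sum diag_q_site fb_finite assms fb_down)

lemma qf_eq:
  assumes "S - modes X = T - modes X" "x \<notin> X"
  shows "qf x S = qf x T"
proof -
  have "(x, b) \<notin> modes X" for b using assms(2) unfolding modes_def by auto
  then have "(x, b) \<in> S \<longleftrightarrow> (x, b) \<in> T" for b using assms(1) by blast
  then show ?thesis unfolding qf_def by simp
qed

lemma comm_entry:
  assumes fin: "finite \<Lambda>" and ev: "\<And>X. X \<subseteq> \<Lambda> \<Longrightarrow> K X \<in> car_alg (fock_basis \<Lambda>) (modes X)"
    and S: "S \<in> fock_basis \<Lambda>"
  shows "opapp (fock_basis \<Lambda>) (commutator (fock_basis \<Lambda>) (K_total \<Lambda> K) (qbar \<Lambda>)) v S
    = (1 / of_nat (card \<Lambda>)) * (\<Sum>x\<in>\<Lambda>. \<Sum>X\<in>{X. X \<subseteq> \<Lambda> \<and> x \<in> X}.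
        opapp (fock_basis \<Lambda>) (K X) (\<lambda>T. qf x T * v T) S - qf x S * opapp (fock_basis \<Lambda>) (K X) v S)"
proof -
  define B where "B = fock_basis \<Lambda>"
  define c where "c = (1 / of_nat (card \<Lambda>) :: complex)"
  have finB: "finite B" unfolding B_def by (rule fb_finite[OF fin])
  define h where "h = (\<lambda>X x T. K X S T * (qf x T - qf x S) * v T)"
  have vanish: "h X x T = 0" if "X \<subseteq> \<Lambda>" "x \<notin> X" for X x T
  proof (cases "K X S T = 0")
    case False
    have "S - modes X = T - modes X" by (rule car_alg_support[OF ev[OF that(1)] False])
    then have "qf x S = qf x T" by (rule qf_eq[OF _ that(2)])
    then show ?thesis unfolding h_def by simp
  qed (simp add: h_def)
  have step1: "opapp B (commutator B (K_total \<Lambda> K) (qbar \<Lambda>)) v S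
      = (\<Sum>T\<in>B. c * (\<Sum>X\<in>Pow \<Lambda>. \<Sum>x\<in>\<Lambda>. h X x T))"
    unfolding opapp_def
  proof (rule sum.cong[OF refl])
    fix T assume T: "T \<in> B"
    have "commutator B (K_total \<Lambda> K) (qbar \<Lambda>) S T
       = K_total \<Lambda> K S T * (c * (\<Sum>x\<in>\<Lambda>. qf x T) - c * (\<Sum>x\<in>\<Lambda>. qf x S))"
      using comm_diag[OF finB qbar_diag[OF fin, folded B_def] _ T] S unfolding B_def c_def by simp
    also have "\<dots> = c * (\<Sum>X\<in>Pow \<Lambda>. \<Sum>x\<in>\<Lambda>. K X S T * (qf x T - qf x S))"
    proof -
      have "c * (\<Sum>x\<in>\<Lambda>. qf x T) - c * (\<Sum>x\<in>\<Lambda>. qf x S) = c * (\<Sum>x\<in>\<Lambda>. qf x T - qf x S)"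
        by (simp add: sum_subtractf right_diff_distrib)
      then have "K_total \<Lambda> K S T * (c * (\<Sum>x\<in>\<Lambda>. qf x T) - c * (\<Sum>x\<in>\<Lambda>. qf x S))
          = c * ((\<Sum>X\<in>Pow \<Lambda>. K X S T) * (\<Sum>x\<in>\<Lambda>. qf x T - qf x S))"
        unfolding K_total_def by simp
      also have "\<dots> = c * (\<Sum>X\<in>Pow \<Lambda>. \<Sum>x\<in>\<Lambda>. K X S T * (qf x T - qf x S))"
      proof -
        have "(\<Sum>X\<in>Pow \<Lambda>. K X S T) * (\<Sum>x\<in>\<Lambda>. qf x T - qf x S)
            = (\<Sum>X\<in>Pow \<Lambda>. K X S T * (\<Sum>x\<in>\<Lambda>. qf x T - qf x S))"
          by (rule sum_distrib_right)
        also have "\<dots> = (\<Sum>X\<in>Pow \<Lambda>. \<Sum>x\<in>\<Lambda>. K X S T * (qf x T - qf x S))"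
          by (simp only: sum_distrib_left)
        finally show ?thesis by simp
      qed
      finally show ?thesis .
    qed
    finally show "commutator B (K_total \<Lambda> K) (qbar \<Lambda>) S T * v T = c * (\<Sum>X\<in>Pow \<Lambda>. \<Sum>x\<in>\<Lambda>. h X x T)"
      unfolding h_def by (simp only: mult.assoc sum_distrib_right)
  qed
  also have "\<dots> = c * (\<Sum>T\<in>B. \<Sum>x\<in>\<Lambda>. \<Sum>X\<in>Pow \<Lambda>. h X x T)"
  proof -
    have "(\<Sum>X\<in>Pow \<Lambda>. \<Sum>x\<in>\<Lambda>. h X x T) = (\<Sum>x\<in>\<Lambda>. \<Sum>X\<in>Pow \<Lambda>. h X x T)" for T
      by (rule sum.swap)
    then show ?thesis by (simp only: sum_distrib_left[symmetric])
  qed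
  also have "\<dots> = c * (\<Sum>T\<in>B. \<Sum>x\<in>\<Lambda>. \<Sum>X\<in>{X. X \<subseteq> \<Lambda> \<and> x \<in> X}. h X x T)"
  proof -
    have "(\<Sum>X\<in>Pow \<Lambda>. h X x T) = (\<Sum>X\<in>{X. X \<subseteq> \<Lambda> \<and> x \<in> X}. h X x T)" for x T
      by (rule sum.mono_neutral_right) (use fin vanish in auto)
    then show ?thesis by simp
  qed
  also have "\<dots> = c * (\<Sum>x\<in>\<Lambda>. \<Sum>X\<in>{X. X \<subseteq> \<Lambda> \<and> x \<in> X}. \<Sum>T\<in>B. h X x T)"
  proof -
    have "(\<Sum>T\<in>B. \<Sum>x\<in>\<Lambda>. \<Sum>X\<in>{X. X \<subseteq> \<Lambda> \<and> x \<in> X}. h X x T)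
        = (\<Sum>x\<in>\<Lambda>. \<Sum>T\<in>B. \<Sum>X\<in>{X. X \<subseteq> \<Lambda> \<and> x \<in> X}. h X x T)"
      by (rule sum.swap)
    also have "\<dots> = (\<Sum>x\<in>\<Lambda>. \<Sum>X\<in>{X. X \<subseteq> \<Lambda> \<and> x \<in> X}. \<Sum>T\<in>B. h X x T)"
      by (rule sum.cong[OF refl]) (rule sum.swap)
    finally show ?thesis by simp
  qed
  also have "\<dots> = c * (\<Sum>x\<in>\<Lambda>. \<Sum>X\<in>{X. X \<subseteq> \<Lambda> \<and> x \<in> X}.
        opapp B (K X) (\<lambda>T. qf x T * v T) S - qf x S * opapp B (K X) v S)"
  proof -
    have "(\<Sum>T\<in>B. h X x T) = opapp B (K X) (\<lambda>T. qf x T * v T) S - qf x S * opapp B (K X) v S" for X x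
    proof -
      have "(\<Sum>T\<in>B. h X x T) = (\<Sum>T\<in>B. K X S T * (qf x T * v T) - qf x S * (K X S T * v T))"
        unfolding h_def by (rule sum.cong) (auto simp: algebra_simps)
      also have "\<dots> = opapp B (K X) (\<lambda>T. qf x T * v T) S - qf x S * opapp B (K X) v S"
        unfolding opapp_def by (simp add: sum_subtractf sum_distrib_left)
      finally show ?thesis .
    qed
    then show ?thesis by simp
  qed
  finally show ?thesis unfolding B_def c_def .
qed


theorem lemmaA5:
  fixes d L :: nat and K :: "site set \<Rightarrow> op" and \<kappa> :: real
  assumes "even L" and "L > 0"
    and "even_interaction (Lam d L) K"
    and "\<kappa> \<ge> 0"
  shows "opnorm (fock_basis (Lam d L))
            (commutator (fock_basis (Lam d L)) (K_total (Lam d L) K) (qbar (Lam d L)))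
           \<le> 2 * int_norm (Lam d L) K 0
       \<and> 2 * int_norm (Lam d L) K 0 \<le> 2 * int_norm (Lam d L) K \<kappa>"
proof -
  define \<Lambda> where "\<Lambda> = Lam d L"
  define B where "B = fock_basis \<Lambda>"
  have fin: "finite \<Lambda>" unfolding \<Lambda>_def by (rule Lam_finite)
  have ne: "\<Lambda> \<noteq> {}" unfolding \<Lambda>_def using Lam_ne assms(2) by blast
  have finB: "finite B" unfolding B_def by (rule fb_finite[OF fin])
  have ev: "\<And>X. X \<subseteq> \<Lambda> \<Longrightarrow> K X \<in> car_alg B (modes X)"
    using assms(3) unfolding even_interaction_def \<Lambda>_def B_def by blast
  have finX: "finite {X. X \<subseteq> \<Lambda> \<and> x \<in> X}" for x
    by (rule finite_subset[of _ "Pow \<Lambda>"]) (use fin in auto)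
  define F where "F = (\<lambda>\<kappa> x. \<Sum>X\<in>{X. X \<subseteq> \<Lambda> \<and> x \<in> X}. exp (\<kappa> * real (card X)) * opnorm B (K X))"
  have IN_def: "int_norm \<Lambda> K k = Sup (F k ` \<Lambda>)" for k
    unfolding int_norm_def F_def B_def by simp
  define I where "I = int_norm \<Lambda> K 0"
  have F_le: "F k x \<le> int_norm \<Lambda> K k" if "x \<in> \<Lambda>" for k x
    unfolding IN_def by (rule cSup_upper) (use that fin in auto)
  have per_x: "(\<Sum>X\<in>{X. X \<subseteq> \<Lambda> \<and> x \<in> X}. opnorm B (K X)) \<le> I" if "x \<in> \<Lambda>" for x
    using F_le[OF that, of 0] unfolding F_def I_def by simp
  have Inn: "0 \<le> I"
  proof -
    obtain x where "x \<in> \<Lambda>" using ne by blast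
    have "0 \<le> (\<Sum>X\<in>{X. X \<subseteq> \<Lambda> \<and> x \<in> X}. opnorm B (K X))"
      by (rule sum_nonneg) (simp add: opnorm_nonneg finB)
    then show ?thesis using per_x[OF \<open>x \<in> \<Lambda>\<close>] by linarith
  qed
  have part1: "opnorm B (commutator B (K_total \<Lambda> K) (qbar \<Lambda>)) \<le> 2 * I"
  proof (rule opnorm_le)
    fix v assume v: "vnorm B v \<le> 1"
    define t where "t = (\<lambda>x X S. opapp B (K X) (\<lambda>T. qf x T * v T) S - qf x S * opapp B (K X) v S)"
    define c where "c = (1 / of_nat (card \<Lambda>) :: complex)"
    have "vnorm B (opapp B (commutator B (K_total \<Lambda> K) (qbar \<Lambda>)) v)
        = vnorm B (\<lambda>S. c * (\<Sum>x\<in>\<Lambda>. \<Sum>X\<in>{X. X \<subseteq> \<Lambda> \<and> x \<in> X}. t x X S))"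
      by (rule vnorm_cong) (use comm_entry[OF fin ev[unfolded B_def]] in \<open>simp add: B_def t_def c_def\<close>)
    also have "\<dots> = cmod c * vnorm B (\<lambda>S. \<Sum>x\<in>\<Lambda>. \<Sum>X\<in>{X. X \<subseteq> \<Lambda> \<and> x \<in> X}. t x X S)"
      by (rule vnorm_scale)
    also have "\<dots> \<le> cmod c * (\<Sum>x\<in>\<Lambda>. \<Sum>X\<in>{X. X \<subseteq> \<Lambda> \<and> x \<in> X}. vnorm B (t x X))"
    proof (rule mult_left_mono)
      have "vnorm B (\<lambda>S. \<Sum>x\<in>\<Lambda>. \<Sum>X\<in>{X. X \<subseteq> \<Lambda> \<and> x \<in> X}. t x X S)
          \<le> (\<Sum>x\<in>\<Lambda>. vnorm B (\<lambda>S. \<Sum>X\<in>{X. X \<subseteq> \<Lambda> \<and> x \<in> X}. t x X S))"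
        by (rule vnorm_sum[OF fin])
      also have "\<dots> \<le> (\<Sum>x\<in>\<Lambda>. \<Sum>X\<in>{X. X \<subseteq> \<Lambda> \<and> x \<in> X}. vnorm B (t x X))"
        by (rule sum_mono) (rule vnorm_sum[OF finX])
      finally show "vnorm B (\<lambda>S. \<Sum>x\<in>\<Lambda>. \<Sum>X\<in>{X. X \<subseteq> \<Lambda> \<and> x \<in> X}. t x X S)
          \<le> (\<Sum>x\<in>\<Lambda>. \<Sum>X\<in>{X. X \<subseteq> \<Lambda> \<and> x \<in> X}. vnorm B (t x X))" .
    qed simp
    also have "\<dots> \<le> cmod c * (\<Sum>x\<in>\<Lambda>. \<Sum>X\<in>{X. X \<subseteq> \<Lambda> \<and> x \<in> X}. 2 * opnorm B (K X))"
    proof (rule mult_left_mono[OF sum_mono[OF sum_mono]])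
      fix x :: site and X :: "site set"
      have qv: "vnorm B (\<lambda>T. qf x T * v T) \<le> 1"
      proof -
        have "vnorm B (\<lambda>T. qf x T * v T) \<le> vnorm B v"
          by (rule vnorm_mono) (simp add: norm_mult qf_bound mult_left_le_one_le)
        then show ?thesis using v by simp
      qed
      have a: "vnorm B (opapp B (K X) (\<lambda>T. qf x T * v T)) \<le> opnorm B (K X)"
        by (rule opnorm_upper[OF finB qv])
      have b: "vnorm B (\<lambda>S. qf x S * opapp B (K X) v S) \<le> opnorm B (K X)"
      proof -
        have "vnorm B (\<lambda>S. qf x S * opapp B (K X) v S) \<le> vnorm B (opapp B (K X) v)"
          by (rule vnorm_mono) (simp add: norm_mult qf_bound mult_left_le_one_le)
        also have "\<dots> \<le> opnorm B (K X)" by (rule opnorm_upper[OF finB v])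
        finally show ?thesis .
      qed
      have "vnorm B (t x X) \<le> vnorm B (opapp B (K X) (\<lambda>T. qf x T * v T)) + vnorm B (\<lambda>S. qf x S * opapp B (K X) v S)"
        unfolding t_def by (rule vnorm_diff)
      then show "vnorm B (t x X) \<le> 2 * opnorm B (K X)" using a b by linarith
    qed simp
    also have "\<dots> \<le> cmod c * (\<Sum>x\<in>\<Lambda>. 2 * I)"
      by (rule mult_left_mono[OF sum_mono]) (use per_x in \<open>auto simp: sum_distrib_left[symmetric]\<close>)
    also have "\<dots> = 2 * I"
      using fin ne by (simp add: c_def norm_divide)
    finally show "vnorm B (opapp B (commutator B (K_total \<Lambda> K) (qbar \<Lambda>)) v) \<le> 2 * I" .
  qed
  have part2: "I \<le> int_norm \<Lambda> K \<kappa>"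
    unfolding I_def IN_def
  proof (rule cSUP_mono)
    show "\<Lambda> \<noteq> {}" by (rule ne)
    show "bdd_above (F \<kappa> ` \<Lambda>)" using fin by simp
    fix x assume x: "x \<in> \<Lambda>"
    have "F 0 x \<le> F \<kappa> x"
      unfolding F_def
    proof (rule sum_mono)
      fix X :: "site set"
      have "1 \<le> exp (\<kappa> * real (card X))" using assms(4) by simp
      then show "exp (0 * real (card X)) * opnorm B (K X) \<le> exp (\<kappa> * real (card X)) * opnorm B (K X)"
        using opnorm_nonneg[OF finB, of "K X"] mult_right_mono[OF \<open>1 \<le> exp (\<kappa> * real (card X))\<close>, of "opnorm B (K X)"]
        by simp
    qed
    then show "\<exists>m\<in>\<Lambda>. F 0 x \<le> F \<kappa> m" using x by blast
  qed
  show ?thesis using part1 part2 unfolding I_def B_def \<Lambda>_def by simp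
qed

end
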